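(* Let $n,d,k$ be positive integers with $n\ge dk$. Then the value of the single-treasure-per-door search game with parameters $(n,d,k)$ is $$v_1(n,d,k)=\frac{k^d}{\binom nd}.$$
   Context: The single-treasure-per-door search game with parameters $(n,d,k)$ is the following two-player zero-sum game. First the hider places $d$ treasures behind $n$ doors, at most one treasure behind each door. Then the searcher plays rounds: in each round she selects (guesses) a set of at most $k$ doors. If none of the selected doors hides a treasure not yet found, she loses immediately. Otherwise the hider reveals one not-yet-found treasure behind one of the selected doors (the hider chooses which one if there are several). The searcher wins if she finds all $d$ treasures with a total of $d$ guesses (rounds). The searcher's choices may be randomized and may depend on all previous answers; the hider may randomize his hiding and revealing choices. The value $v_1(n,d,k)$ is the probability that the searcher wins when both players play optimally. *)

theory Defs
  imports "HOL-Probability.Probability_Mass_Function"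
begin

text \<open>Doors are 0..<n. A history is the list of past rounds, each round being
 (set of guessed doors, door revealed by the hider).\<close>

type_synonym history = "(nat set \<times> nat) list"

type_synonym searcher = "history \<Rightarrow> nat set"
type_synonym revealer = "history \<Rightarrow> nat set \<Rightarrow> nat"

definition found :: "history \<Rightarrow> nat set" where
  "found h = snd ` set h"

definition valid_searcher :: "nat \<Rightarrow> nat \<Rightarrow> searcher \<Rightarrow> bool" where
  "valid_searcher n k s \<longleftrightarrow>
     (\<forall>h. s h \<subseteq> {0..<n} \<and> finite (s h) \<and> card (s h) \<le> k)"

definition valid_hider :: "nat \<Rightarrow> nat \<Rightarrow> nat set \<Rightarrow> revealer \<Rightarrow> bool" where
  "valid_hider n d T r \<longleftrightarrow>
     T \<subseteq> {0..<n} \<and> card T = d \<and>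
     (\<forall>h G. G \<inter> (T - found h) \<noteq> {} \<longrightarrow> r h G \<in> G \<inter> (T - found h))"

fun wins :: "searcher \<Rightarrow> revealer \<Rightarrow> nat set \<Rightarrow> history \<Rightarrow> nat \<Rightarrow> bool" where
  "wins s r T h 0 = True"
| "wins s r T h (Suc m) =
     (let G = s h in
      if G \<inter> (T - found h) = {} then False
      else wins s r T (h @ [(G, r h G)]) m)"

definition is_value_v1 :: "nat \<Rightarrow> nat \<Rightarrow> nat \<Rightarrow> real \<Rightarrow> bool" where
  "is_value_v1 n d k v \<longleftrightarrow>
     (\<exists>\<sigma> :: searcher pmf.
        (\<forall>s\<in>set_pmf \<sigma>. valid_searcher n k s) \<and>
        (\<forall>T r. valid_hider n d T r \<longrightarrow>
           measure_pmf.prob \<sigma> {s. wins s r T [] d} \<ge> v)) \<and>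
     (\<exists>\<tau> :: (nat set \<times> revealer) pmf.
        (\<forall>(T, r)\<in>set_pmf \<tau>. valid_hider n d T r) \<and>
        (\<forall>s. valid_searcher n k s \<longrightarrow>
           measure_pmf.prob \<tau> {(T, r). wins s r T [] d} \<le> v))"

end

theory Submission
  imports Defs "HOL-Combinatorics.Permutations"
begin


fun reach :: "searcher \<Rightarrow> nat \<Rightarrow> history set" where
  "reach s 0 = {[]}"
| "reach s (Suc m) = (\<Union>h\<in>reach s m. (\<lambda>x. h @ [(s h, x)]) ` s h)"

lemma found_Nil[simp]: "found [] = {}" by (simp add: found_def)
lemma found_snoc[simp]: "found (h @ [(G, x)]) = insert x (found h)"
  by (auto simp: found_def)
lemma finite_found[simp]: "finite (found h)" by (simp add: found_def)

lemma card_reach: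
  assumes "\<And>h. finite (s h) \<and> card (s h) \<le> k"
  shows "finite (reach s m) \<and> card (reach s m) \<le> k ^ m"
proof (induction m)
  case 0 then show ?case by simp
next
  case (Suc m)
  have fin: "finite (reach s (Suc m))" using Suc assms by auto
  have "card (reach s (Suc m)) \<le> (\<Sum>h\<in>reach s m. card ((\<lambda>x. h @ [(s h, x)]) ` s h))"
    using Suc by (simp add: card_UN_le)
  also have "\<dots> \<le> (\<Sum>h\<in>reach s m. k)"
    by (rule sum_mono) (meson assms card_image_le le_trans)
  also have "\<dots> \<le> k ^ m * k" using Suc by simp
  finally show ?case using fin by (simp add: mult.commute)
qed

lemma wins_reach:
  assumes vh: "valid_hider n d T r"
  shows "wins s r T h m \<Longrightarrow> h \<in> reach s j \<Longrightarrow> found h \<subseteq> T \<Longrightarrow>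
    \<exists>h'\<in>reach s (j+m). found h' \<subseteq> T \<and> card (found h) + m \<le> card (found h')"
proof (induction m arbitrary: h j)
  case 0 then show ?case by auto
next
  case (Suc m)
  let ?G = "s h"
  have ne: "?G \<inter> (T - found h) \<noteq> {}" and w: "wins s r T (h @ [(?G, r h ?G)]) m"
    using Suc.prems(1) by (auto simp: Let_def split: if_splits)
  have x: "r h ?G \<in> ?G \<inter> (T - found h)" using vh ne by (auto simp: valid_hider_def)
  have hr: "h @ [(?G, r h ?G)] \<in> reach s (Suc j)" using Suc.prems(2) x by auto
  have fs: "found (h @ [(?G, r h ?G)]) \<subseteq> T" using Suc.prems(3) x by simp
  obtain h' where "h' \<in> reach s (Suc j + m)" "found h' \<subseteq> T"
     "card (found (h @ [(?G, r h ?G)])) + m \<le> card (found h')"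
    using Suc.IH[OF w hr fs] by blast
  moreover have "Suc j + m = j + Suc m" by simp
  moreover have "card (found (h @ [(?G, r h ?G)])) = Suc (card (found h))"
    using x by simp
  ultimately show ?case by (metis add_Suc add_Suc_right)
qed

definition rT :: "nat set \<Rightarrow> revealer" where
  "rT T h G = (if G \<inter> (T - found h) = {} then 0 else Min (G \<inter> (T - found h)))"

lemma hider_part:
  assumes "0 < d" "d \<le> n"
  shows "\<exists>\<tau> :: (nat set \<times> revealer) pmf.
        (\<forall>(T, r)\<in>set_pmf \<tau>. valid_hider n d T r) \<and>
        (\<forall>s. valid_searcher n k s \<longrightarrow>
           measure_pmf.prob \<tau> {(T, r). wins s r T [] d} \<le> real k ^ d / real (n choose d))"
proof -
  define D where "D = {T. T \<subseteq> {0..<n} \<and> card T = d}"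
  have cD: "card D = n choose d" unfolding D_def using n_subsets[of "{0..<n}" d] by simp
  have finD: "finite D" unfolding D_def by (rule finite_subset[of _ "Pow {0..<n}"]) auto
  have neD: "D \<noteq> {}" using cD assms by (metis card.empty zero_less_binomial_iff not_less0 bot_nat_0.not_eq_extremum)
  have vh: "valid_hider n d T (rT T)" if "T \<in> D" for T
  proof -
    have fT: "finite T" using that assms unfolding D_def by (auto intro: card_ge_0_finite)
    have "Min (G \<inter> (T - found h)) \<in> G \<inter> (T - found h)" if "G \<inter> (T - found h) \<noteq> {}" for G h
      using fT that by (intro Min_in) auto
    then show ?thesis using that unfolding valid_hider_def rT_def D_def by auto
  qed
  define \<tau> where "\<tau> = map_pmf (\<lambda>T. (T, rT T)) (pmf_of_set D)"
  have sp: "set_pmf \<tau> = (\<lambda>T. (T, rT T)) ` D" unfolding \<tau>_def using finD neD by simp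
  show ?thesis
  proof (intro exI conjI allI impI)
    show "\<forall>(T, r)\<in>set_pmf \<tau>. valid_hider n d T r" using sp vh by auto
  next
    fix s assume vs: "valid_searcher n k s"
    have sk: "\<And>h. finite (s h) \<and> card (s h) \<le> k" using vs by (simp add: valid_searcher_def)
    have sub: "D \<inter> {T. wins s (rT T) T [] d} \<subseteq> found ` reach s d"
    proof
      fix T assume "T \<in> D \<inter> {T. wins s (rT T) T [] d}"
      then have TD: "T \<in> D" and w: "wins s (rT T) T [] d" by auto
      obtain h' where h': "h' \<in> reach s d" "found h' \<subseteq> T" "d \<le> card (found h')"
        using wins_reach[OF vh[OF TD] w, of 0] by auto
      have "finite T" using TD assms unfolding D_def by (auto intro: card_ge_0_finite)
      then have "found h' = T" using h' TD unfolding D_def by (simp add: card_seteq)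
      then show "T \<in> found ` reach s d" using h' by auto
    qed
    have "card (D \<inter> {T. wins s (rT T) T [] d}) \<le> card (found ` reach s d)"
      by (rule card_mono[OF finite_imageI[OF conjunct1[OF card_reach[OF sk]]] sub])
    also have "\<dots> \<le> k ^ d"
      by (rule le_trans[OF card_image_le[OF conjunct1[OF card_reach[OF sk]]] conjunct2[OF card_reach[OF sk]]])
    finally have cw: "card (D \<inter> {T. wins s (rT T) T [] d}) \<le> k ^ d" .
    have "measure_pmf.prob \<tau> {(T, r). wins s r T [] d}
        = measure_pmf.prob (pmf_of_set D) {T. wins s (rT T) T [] d}"
      unfolding \<tau>_def by (simp add: vimage_def)
    also have "\<dots> = card (D \<inter> {T. wins s (rT T) T [] d}) / card D"
      using finD neD by (simp add: measure_pmf_of_set)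
    also have "\<dots> \<le> real k ^ d / real (n choose d)"
      using cw cD by (simp add: divide_right_mono flip: of_nat_power)
    finally show "measure_pmf.prob \<tau> {(T, r). wins s r T [] d} \<le> real k ^ d / real (n choose d)" .
  qed
qed



definition blk :: "nat \<Rightarrow> nat \<Rightarrow> nat set" where
  "blk k j = {j * k ..< Suc j * k}"

definition sP :: "nat \<Rightarrow> nat \<Rightarrow> (nat \<Rightarrow> nat) \<Rightarrow> searcher" where
  "sP d k \<pi> h = (if length h < d then \<pi> ` blk k (length h) else {})"

definition good :: "nat \<Rightarrow> nat \<Rightarrow> (nat \<Rightarrow> nat) \<Rightarrow> nat set \<Rightarrow> bool" where
  "good d k \<pi> T \<longleftrightarrow> (\<forall>j<d. T \<inter> \<pi> ` blk k j \<noteq> {})"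

lemma blk_div: "y \<in> blk k j \<Longrightarrow> y div k = j"
  unfolding blk_def by (intro div_nat_eqI) (auto simp: mult.commute)

lemma blk_disj: "y \<in> blk k i \<Longrightarrow> y \<in> blk k j \<Longrightarrow> i = j"
  using blk_div by metis

lemma win_good:
  assumes "inj \<pi>" "valid_hider n d T r" "good d k \<pi> T"
  shows "length h + m \<le> d \<Longrightarrow> found h \<subseteq> \<pi> ` {0..<length h * k} \<Longrightarrow> wins (sP d k \<pi>) r T h m"
proof (induction m arbitrary: h)
  case 0 then show ?case by simp
next
  case (Suc m)
  let ?L = "length h"
  let ?G = "sP d k \<pi> h"
  have L: "?L < d" using Suc.prems by simp
  have G: "?G = \<pi> ` blk k ?L" using L by (simp add: sP_def)
  obtain x where x: "x \<in> T" "x \<in> \<pi> ` blk k ?L" using assms(3) L unfolding good_def by blast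
  then obtain y where y: "y \<in> blk k ?L" "x = \<pi> y" by auto
  have "y \<notin> {0..<?L * k}" using y(1) by (simp add: blk_def)
  then have "x \<notin> \<pi> ` {0..<?L * k}" using y(2) assms(1) by (auto simp: inj_eq)
  then have "x \<notin> found h" using Suc.prems(2) by blast
  then have ne: "?G \<inter> (T - found h) \<noteq> {}" using x G by blast
  have rr: "r h ?G \<in> ?G" using assms(2) ne unfolding valid_hider_def by blast
  have "blk k ?L \<union> {0..<?L * k} = {0..<Suc ?L * k}" by (auto simp: blk_def)
  note eq = this
  have "found (h @ [(?G, r h ?G)]) = insert (r h ?G) (found h)" by simp
  also have "\<dots> \<subseteq> \<pi> ` (blk k ?L \<union> {0..<?L * k})" using Suc.prems(2) rr G by blast
  also have "\<dots> = \<pi> ` {0..<length (h @ [(?G, r h ?G)]) * k}" unfolding eq length_append_singleton ..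
  finally have f2: "found (h @ [(?G, r h ?G)]) \<subseteq> \<pi> ` {0..<length (h @ [(?G, r h ?G)]) * k}" .
  have l2: "length (h @ [(?G, r h ?G)]) + m \<le> d" using Suc.prems(1) by simp
  have w: "wins (sP d k \<pi>) r T (h @ [(?G, r h ?G)]) m" by (rule Suc.IH[OF l2 f2])
  have "wins (sP d k \<pi>) r T h (Suc m) = wins (sP d k \<pi>) r T (h @ [(?G, r h ?G)]) m"
    unfolding wins.simps Let_def if_not_P[OF ne] ..
  then show ?case using w by simp
qed

lemma valid_sP:
  assumes "\<pi> permutes {0..<n}" "d * k \<le> n"
  shows "valid_searcher n k (sP d k \<pi>)"
  unfolding valid_searcher_def
proof
  fix h
  show "sP d k \<pi> h \<subseteq> {0..<n} \<and> finite (sP d k \<pi> h) \<and> card (sP d k \<pi> h) \<le> k"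
  proof (cases "length h < d")
    case True
    have "Suc (length h) * k \<le> d * k" using True by (intro mult_right_mono) auto
    then have "blk k (length h) \<subseteq> {0..<n}" using assms(2) by (auto simp: blk_def)
    then have "\<pi> ` blk k (length h) \<subseteq> {0..<n}" using permutes_image[OF assms(1)] by blast
    moreover have "card (\<pi> ` blk k (length h)) \<le> k"
      using card_image_le[of "blk k (length h)" \<pi>] by (simp add: blk_def)
    moreover have "finite (\<pi> ` blk k (length h))" by (simp add: blk_def)
    moreover have "sP d k \<pi> h = \<pi> ` blk k (length h)" using True by (simp add: sP_def)
    ultimately show ?thesis by simp
  qed (simp add: sP_def)
qed

lemma perm_exists:
  assumes "finite S" "A \<subseteq> S" "B \<subseteq> S" "card A = card B"
  shows "\<exists>\<rho>. \<rho> permutes S \<and> \<rho> ` A = B"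
proof -
  have fA: "finite A" using assms(1,2) by (rule finite_subset[rotated])
  have fB: "finite B" using assms(1,3) by (rule finite_subset[rotated])
  obtain f where f: "bij_betw f A B" using finite_same_card_bij[OF fA fB assms(4)] by (elim exE)
  have "card (S - A) = card (S - B)"
    using assms fA fB by (simp add: card_Diff_subset)
  then obtain g where g: "bij_betw g (S - A) (S - B)"
    using finite_same_card_bij[of "S - A" "S - B"] assms(1) by auto
  define \<rho> where "\<rho> x = (if x \<in> A then f x else if x \<in> S then g x else x)" for x
  have r1: "bij_betw \<rho> A B" using f by (rule bij_betw_cong[THEN iffD1, rotated]) (simp add: \<rho>_def)
  moreover have "bij_betw \<rho> (S - A) (S - B)" using g
    by (rule bij_betw_cong[THEN iffD1, rotated]) (simp add: \<rho>_def)
  ultimately have "bij_betw \<rho> (A \<union> (S - A)) (B \<union> (S - B))" by (rule bij_betw_combine) blast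
  moreover have "A \<union> (S - A) = S" "B \<union> (S - B) = S" using assms(2,3) by blast+
  ultimately have "bij_betw \<rho> S S" by simp
  moreover have "\<rho> x = x" if "x \<notin> S" for x
    using that assms(2) unfolding \<rho>_def by auto
  ultimately have "\<rho> permutes S" by (rule bij_imp_permutes)
  moreover have "\<rho> ` A = B" using r1 by (simp add: bij_betw_def)
  ultimately show ?thesis by blast
qed



lemma card_blk[simp]: "card (blk k i) = k"
  by (simp add: blk_def)

lemma blk_sub: "i < d \<Longrightarrow> d * k \<le> n \<Longrightarrow> blk k i \<subseteq> {0..<n}"
proof -
  assume "i < d" "d * k \<le> n"
  then have "Suc i * k \<le> n" by (meson Suc_leI le_trans mult_le_mono1)
  then show ?thesis by (auto simp: blk_def)
qed

lemma count_pi: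
  assumes pi: "\<pi> permutes {0..<n}" and dk: "d * k \<le> n"
  shows "k ^ d \<le> card {T \<in> {T. T \<subseteq> {0..<n} \<and> card T = d}. good d k \<pi> T}"
proof -
  define PI where "PI = PiE {..<d} (blk k)"
  define F where "F f = \<pi> ` f ` {..<d}" for f :: "nat \<Rightarrow> nat"
  have inj\<pi>: "inj \<pi>" using pi by (rule permutes_inj)
  have cPI: "card PI = k ^ d" unfolding PI_def by (simp add: card_PiE)
  have fi: "f i \<in> blk k i" if "f \<in> PI" "i < d" for f i using that unfolding PI_def by auto
  have injf: "inj_on f {..<d}" if "f \<in> PI" for f
    unfolding inj_on_def using fi[OF that] blk_disj by (metis lessThan_iff)
  have "inj_on F PI"
  proof (rule inj_onI)
    fix f g assume f: "f \<in> PI" and g: "g \<in> PI" and e: "F f = F g"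
    then have e2: "f ` {..<d} = g ` {..<d}" unfolding F_def using inj\<pi> by (simp add: inj_image_eq_iff)
    show "f = g"
    proof (rule PiE_ext[OF f[unfolded PI_def] g[unfolded PI_def]])
      fix i assume i: "i \<in> {..<d}"
      then have "f i \<in> g ` {..<d}" using e2 by blast
      then obtain j where j: "j < d" "f i = g j" by auto
      have "f i \<in> blk k i" using fi[OF f] i by simp
      moreover have "g j \<in> blk k j" using fi[OF g] j(1) by simp
      ultimately have "i = j" using j(2) blk_disj by metis
      then show "f i = g i" using j by simp
    qed
  qed
  moreover have "F ` PI \<subseteq> {T \<in> {T. T \<subseteq> {0..<n} \<and> card T = d}. good d k \<pi> T}"
  proof
    fix T assume "T \<in> F ` PI"
    then obtain f where f: "f \<in> PI" and T: "T = \<pi> ` f ` {..<d}" unfolding F_def by auto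
    have "f ` {..<d} \<subseteq> {0..<n}" using fi[OF f] blk_sub[OF _ dk] by blast
    then have "T \<subseteq> {0..<n}" using T permutes_image[OF pi] by blast
    moreover have "card T = d" unfolding T
      using inj\<pi> injf[OF f] by (simp add: card_image inj_on_subset[OF inj\<pi>] card_image)
    moreover have "good d k \<pi> T" unfolding good_def T using fi[OF f] by blast
    ultimately show "T \<in> {T \<in> {T. T \<subseteq> {0..<n} \<and> card T = d}. good d k \<pi> T}" by simp
  qed
  moreover have "finite {T \<in> {T. T \<subseteq> {0..<n} \<and> card T = d}. good d k \<pi> T}"
    by (rule finite_subset[of _ "Pow {0..<n}"]) auto
  ultimately have "card PI \<le> card {T \<in> {T. T \<subseteq> {0..<n} \<and> card T = d}. good d k \<pi> T}"
    by (rule card_inj_on_le)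
  then show ?thesis using cPI by simp
qed

lemma good_mono:
  assumes "\<rho> permutes S" "\<rho> ` T = T'" "good d k \<pi> T"
  shows "good d k (\<rho> \<circ> \<pi>) T'"
proof -
  have inj: "inj \<rho>" using assms(1) by (rule permutes_inj)
  show ?thesis unfolding good_def
  proof (intro allI impI)
    fix j assume "j < d"
    then obtain x where "x \<in> T" "x \<in> \<pi> ` blk k j" using assms(3) unfolding good_def by blast
    then have "\<rho> x \<in> T' \<inter> (\<rho> \<circ> \<pi>) ` blk k j" using assms(2) by (auto simp: image_comp[symmetric])
    then show "T' \<inter> (\<rho> \<circ> \<pi>) ` blk k j \<noteq> {}" by blast
  qed
qed

lemma double_count:
  assumes "finite A" "finite B"
  shows "(\<Sum>a\<in>A. card {b\<in>B. Q a b}) = (\<Sum>b\<in>B. card {a\<in>A. Q a b})"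
proof -
  have "(\<Sum>a\<in>A. card {b\<in>B. Q a b}) = (\<Sum>a\<in>A. \<Sum>b\<in>B. if Q a b then 1 else 0)"
    using assms by (simp add: sum.inter_filter[symmetric])
  also have "\<dots> = (\<Sum>b\<in>B. \<Sum>a\<in>A. if Q a b then 1 else 0)" by (rule sum.swap)
  also have "\<dots> = (\<Sum>b\<in>B. card {a\<in>A. Q a b})"
    using assms by (simp add: sum.inter_filter[symmetric])
  finally show ?thesis .
qed



lemma searcher_part:
  assumes "0 < d" "d * k \<le> n"
  shows "\<exists>\<sigma> :: searcher pmf.
        (\<forall>s\<in>set_pmf \<sigma>. valid_searcher n k s) \<and>
        (\<forall>T r. valid_hider n d T r \<longrightarrow>
           measure_pmf.prob \<sigma> {s. wins s r T [] d} \<ge> real k ^ d / real (n choose d))"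
proof -
  define P where "P = {\<pi>. \<pi> permutes {0..<n}}"
  define D where "D = {T. T \<subseteq> {0..<n} \<and> card T = d}"
  have finP: "finite P" unfolding P_def by (rule finite_permutations) simp
  have neP: "P \<noteq> {}" unfolding P_def using permutes_id by blast
  have finD: "finite D" unfolding D_def by (rule finite_subset[of _ "Pow {0..<n}"]) auto
  have cD: "card D = n choose d" unfolding D_def using n_subsets[of "{0..<n}" d] by simp
  define c where "c T = card {\<pi>\<in>P. good d k \<pi> T}" for T
  have mono: "c T' \<le> c T" if TT: "T \<in> D" "T' \<in> D" for T T'
  proof -
    obtain \<rho> where \<rho>: "\<rho> permutes {0..<n}" "\<rho> ` T' = T"
    proof -
      have h: "T' \<subseteq> {0..<n}" "T \<subseteq> {0..<n}" "card T' = card T" using TT unfolding D_def by auto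
      obtain \<rho> where "\<rho> permutes {0..<n}" "\<rho> ` T' = T"
        using perm_exists[OF finite_atLeastLessThan h] by (elim exE conjE)
      then show ?thesis by (rule that)
    qed
    have "inj_on (\<lambda>\<pi>. \<rho> \<circ> \<pi>) {\<pi>\<in>P. good d k \<pi> T'}"
    proof (rule inj_onI)
      fix a b assume ab: "\<rho> \<circ> a = \<rho> \<circ> b"
      show "a = b"
      proof
        fix x
        have "\<rho> (a x) = \<rho> (b x)" using ab by (metis comp_apply)
        then show "a x = b x" using permutes_inj[OF \<rho>(1)] by (simp add: inj_eq)
      qed
    qed
    moreover have "(\<lambda>\<pi>. \<rho> \<circ> \<pi>) ` {\<pi>\<in>P. good d k \<pi> T'} \<subseteq> {\<pi>\<in>P. good d k \<pi> T}"
      using good_mono[OF \<rho>] permutes_compose[OF _ \<rho>(1)] unfolding P_def by auto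
    moreover have "finite {\<pi>\<in>P. good d k \<pi> T}" using finP by simp
    ultimately show ?thesis unfolding c_def by (rule card_inj_on_le)
  qed
  have key: "card P * k ^ d \<le> c T * card D" if T: "T \<in> D" for T
  proof -
    have "card P * k ^ d = (\<Sum>\<pi>\<in>P. k ^ d)" by simp
    also have "\<dots> \<le> (\<Sum>\<pi>\<in>P. card {T'\<in>D. good d k \<pi> T'})"
      by (rule sum_mono) (use count_pi[OF _ assms(2)] in \<open>simp add: P_def D_def\<close>)
    also have "\<dots> = (\<Sum>T'\<in>D. c T')" unfolding c_def by (rule double_count[OF finP finD])
    also have "\<dots> \<le> (\<Sum>T'\<in>D. c T)" by (rule sum_mono) (rule mono[OF T])
    also have "\<dots> = c T * card D" by simp
    finally show ?thesis .
  qed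
  define \<sigma> where "\<sigma> = map_pmf (sP d k) (pmf_of_set P)"
  show ?thesis
  proof (intro exI conjI allI impI)
    show "\<forall>s\<in>set_pmf \<sigma>. valid_searcher n k s"
      unfolding \<sigma>_def using finP neP valid_sP[OF _ assms(2)] by (auto simp: P_def)
  next
    fix T r assume vh: "valid_hider n d T r"
    then have TD: "T \<in> D" unfolding D_def valid_hider_def by simp
    have sub: "{\<pi>\<in>P. good d k \<pi> T} \<subseteq> P \<inter> {\<pi>. wins (sP d k \<pi>) r T [] d}"
    proof
      fix \<pi> assume a: "\<pi> \<in> {\<pi>\<in>P. good d k \<pi> T}"
      then have p: "\<pi> permutes {0..<n}" "good d k \<pi> T" unfolding P_def by auto
      have "wins (sP d k \<pi>) r T [] d"
        using win_good[OF permutes_inj[OF p(1)] vh p(2), where h="[]" and m=d] by simp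
      then show "\<pi> \<in> P \<inter> {\<pi>. wins (sP d k \<pi>) r T [] d}" using a by simp
    qed
    have "real k ^ d / real (n choose d) \<le> real (c T) / real (card P)"
    proof -
      have cP: "0 < card P" using finP neP by (simp add: card_gt_0_iff)
      have cD0: "0 < card D" using cD assms
        by (metis card.empty card_gt_0_iff finD less_numeral_extra(3) TD empty_iff)
      have "real (card P) * real k ^ d \<le> real (c T) * real (card D)"
        using key[OF TD] by (metis of_nat_mult of_nat_power of_nat_mono)
      then show ?thesis using cP cD0 cD by (simp add: field_simps)
    qed
    also have "\<dots> \<le> real (card (P \<inter> {\<pi>. wins (sP d k \<pi>) r T [] d})) / real (card P)"
      unfolding c_def using sub finP by (intro divide_right_mono of_nat_mono card_mono) auto
    also have "\<dots> = measure_pmf.prob (pmf_of_set P) {\<pi>. wins (sP d k \<pi>) r T [] d}"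
      using finP neP by (simp add: measure_pmf_of_set)
    also have "\<dots> = measure_pmf.prob \<sigma> {s. wins s r T [] d}"
      unfolding \<sigma>_def by (simp add: vimage_def)
    finally show "real k ^ d / real (n choose d) \<le> measure_pmf.prob \<sigma> {s. wins s r T [] d}" .
  qed
qed


theorem theorem1:
  fixes n d k :: nat
  assumes "0 < n" and "0 < d" and "0 < k" and "d * k \<le> n"
  shows "is_value_v1 n d k (real k ^ d / real (n choose d))"
proof -
  have "d \<le> d * k" using assms(3) by simp
  then have "d \<le> n" using assms(4) by linarith
  show ?thesis unfolding is_value_v1_def
    using searcher_part[OF assms(2,4)] hider_part[OF assms(2) \<open>d \<le> n\<close>, of k] by blast
qed

end
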